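(* Let $\kappa$ be an ordinal of uncountable cofinality and let $Z$, $Z_X$, $Z_Y$ be as described in the context. Let $z: \alpha \to \alpha$ be a morphism in $Z$. If there exist morphisms $u: \alpha \to \beta$ and $v: \alpha \to \gamma$ in $Z$ such that $u z u^{-1}$ lies in $Z_X$ and $v z v^{-1}$ lies in $Z_Y$, then $z = \mathrm{id}_\alpha$.
   Context: For an ordinal $\alpha \ge 2$ let $G_\alpha$ be the free group on the set $\alpha$; for $\gamma \le \alpha$ let $D^\gamma_\alpha: G_\gamma \to G_\alpha$ be the natural inclusion. Let $Z$ be the groupoid with object set $[2,\kappa)$ generated by: the elements of $G_\alpha$ as automorphisms of the object $\alpha$; and, for each pair $\alpha \neq \beta$ in $[2,\kappa)$, a morphism $y^\beta_\alpha: \beta \to \alpha$; subject to the relations of each group $G_\alpha$ and the relations $y^\beta_\alpha \, D^{\varepsilon}_\beta(a)\, y^\alpha_\beta = D^{\varepsilon}_\alpha(a)$ for all $a \in G_\varepsilon$, $\varepsilon = \min(\alpha,\beta)$ (so $y^\alpha_\beta = (y^\beta_\alpha)^{-1}$). (This is the fundamental groupoid of the graph of groups with vertex groups $G_\alpha$, edges $y^\beta_\alpha$, edge groups $G_{\min(\alpha,\beta)}$ and inclusions as edge maps.) $Z_X$ is the subgroupoid of $Z$ consisting of the morphisms in the image of some vertex group $G_\alpha$. $Z_Y$ is the subgroupoid of $Z$ generated by the edges $y^\beta_\alpha$. *)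

theory Defs
  imports Main "HOL-Library.Countable_Set"
begin

text \<open>Ordinals are modelled as elements of an arbitrary well-ordered type 'o.
  The ordinal alpha is identified with the set of its predecessors, so the free
  group G_alpha on the set alpha is the free group on {xi. xi < alpha}.\<close>

definition uncountable_cofinality :: "'o::wellorder \<Rightarrow> bool" where
  "uncountable_cofinality \<kappa> \<longleftrightarrow>
     (\<forall>S. S \<subseteq> {\<xi>. \<xi> < \<kappa>} \<and> countable S \<longrightarrow> (\<exists>\<beta><\<kappa>. \<forall>\<xi>\<in>S. \<xi> < \<beta>))"

text \<open>Objects of Z: ordinals alpha with 2 <= alpha < kappa.\<close>
definition obj :: "'o::wellorder \<Rightarrow> 'o \<Rightarrow> bool" where
  "obj \<kappa> \<alpha> \<longleftrightarrow> \<alpha> < \<kappa> \<and> (\<exists>a b. a < b \<and> b < \<alpha>)"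

text \<open>Letters: Gen alpha xi s is the free generator xi (exponent +1 if s, -1 otherwise)
  of the vertex group G_alpha, as an automorphism of alpha;
  Edge alpha beta is the edge y^beta_alpha : beta -> alpha.\<close>
datatype 'o letter = Gen 'o 'o bool | Edge 'o 'o

fun lsrc :: "'o letter \<Rightarrow> 'o" where
  "lsrc (Gen \<alpha> \<xi> s) = \<alpha>" | "lsrc (Edge \<alpha> \<beta>) = \<beta>"

fun ltgt :: "'o letter \<Rightarrow> 'o" where
  "ltgt (Gen \<alpha> \<xi> s) = \<alpha>" | "ltgt (Edge \<alpha> \<beta>) = \<alpha>"

fun valid_letter :: "'o::wellorder \<Rightarrow> 'o letter \<Rightarrow> bool" where
  "valid_letter \<kappa> (Gen \<alpha> \<xi> s) \<longleftrightarrow> obj \<kappa> \<alpha> \<and> \<xi> < \<alpha>"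
| "valid_letter \<kappa> (Edge \<alpha> \<beta>) \<longleftrightarrow> obj \<kappa> \<alpha> \<and> obj \<kappa> \<beta> \<and> \<alpha> \<noteq> \<beta>"

fun linv :: "'o letter \<Rightarrow> 'o letter" where
  "linv (Gen \<alpha> \<xi> s) = Gen \<alpha> \<xi> (\<not> s)" | "linv (Edge \<alpha> \<beta>) = Edge \<beta> \<alpha>"

text \<open>Words are read in composition order: [l1,...,ln] denotes l1 o ... o ln.\<close>
definition winv :: "'o letter list \<Rightarrow> 'o letter list" where
  "winv w = rev (map linv w)"

inductive is_path :: "'o::wellorder \<Rightarrow> 'o letter list \<Rightarrow> 'o \<Rightarrow> 'o \<Rightarrow> bool" for \<kappa> where
  Nil: "obj \<kappa> a \<Longrightarrow> is_path \<kappa> [] a a"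
| Cons: "valid_letter \<kappa> l \<Longrightarrow> is_path \<kappa> w s t \<Longrightarrow> lsrc l = t \<Longrightarrow> is_path \<kappa> (l # w) s (ltgt l)"

definition gen_at :: "'o \<Rightarrow> 'o \<times> bool \<Rightarrow> 'o letter" where
  "gen_at \<alpha> p = Gen \<alpha> (fst p) (snd p)"

text \<open>Defining relations: the relations of the free groups G_alpha (free cancellation),
  and y^beta_alpha D^eps_beta(a) y^alpha_beta = D^eps_alpha(a) for every a in G_eps,
  eps = min alpha beta (a given by any word over the generators xi < eps).\<close>
inductive base_rel :: "'o::wellorder \<Rightarrow> 'o letter list \<Rightarrow> 'o letter list \<Rightarrow> bool" for \<kappa> where
  cancel: "obj \<kappa> \<alpha> \<Longrightarrow> \<xi> < \<alpha> \<Longrightarrow> base_rel \<kappa> [Gen \<alpha> \<xi> s, Gen \<alpha> \<xi> (\<not> s)] []"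
| edge: "obj \<kappa> \<alpha> \<Longrightarrow> obj \<kappa> \<beta> \<Longrightarrow> \<alpha> \<noteq> \<beta> \<Longrightarrow> (\<forall>p\<in>set a. fst p < min \<alpha> \<beta>) \<Longrightarrow>
     base_rel \<kappa> ([Edge \<alpha> \<beta>] @ map (gen_at \<beta>) a @ [Edge \<beta> \<alpha>]) (map (gen_at \<alpha>) a)"

definition zstep :: "'o::wellorder \<Rightarrow> 'o letter list \<Rightarrow> 'o letter list \<Rightarrow> bool" where
  "zstep \<kappa> w w' \<longleftrightarrow> (\<exists>p u v q s t. w = p @ u @ q \<and> w' = p @ v @ q \<and> base_rel \<kappa> u v \<and>
        is_path \<kappa> w s t \<and> is_path \<kappa> w' s t)"

definition zeq :: "'o::wellorder \<Rightarrow> 'o letter list \<Rightarrow> 'o letter list \<Rightarrow> bool" where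
  "zeq \<kappa> = (\<lambda>w w'. zstep \<kappa> w w' \<or> zstep \<kappa> w' w)\<^sup>*\<^sup>*"

definition in_ZX :: "'o::wellorder \<Rightarrow> 'o letter list \<Rightarrow> bool" where
  "in_ZX \<kappa> w \<longleftrightarrow> (\<exists>\<delta> x. (\<forall>l\<in>set x. \<exists>\<xi> s. l = Gen \<delta> \<xi> s) \<and> zeq \<kappa> w x)"

definition in_ZY :: "'o::wellorder \<Rightarrow> 'o letter list \<Rightarrow> bool" where
  "in_ZY \<kappa> w \<longleftrightarrow> (\<exists>x. (\<forall>l\<in>set x. \<exists>\<alpha> \<beta>. l = Edge \<alpha> \<beta>) \<and> zeq \<kappa> w x)"

end

theory Submission
  imports Defs
begin

lemma linv_linv[simp]: "linv (linv a) = a"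
  by (cases a) auto

fun cns :: "'o letter \<Rightarrow> 'o letter list \<Rightarrow> 'o letter list" where
  "cns a [] = [a]"
| "cns a (b # xs) = (if b = linv a then xs else a # b # xs)"

definition act :: "'o letter list \<Rightarrow> 'o letter list \<Rightarrow> 'o letter list" where
  "act w r = foldr cns w r"

fun rdd :: "'o letter list \<Rightarrow> bool" where
  "rdd [] = True"
| "rdd [a] = True"
| "rdd (a # b # xs) = (b \<noteq> linv a \<and> rdd (b # xs))"

lemma act_simps[simp]: "act [] r = r" "act (a # w) r = cns a (act w r)"
  "act (w1 @ w2) r = act w1 (act w2 r)"
  by (auto simp: act_def)

lemma rdd_tl: "rdd (b # xs) \<Longrightarrow> rdd xs"
  by (cases xs) auto

lemma rdd_cns: "rdd r \<Longrightarrow> rdd (cns a r)"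
  by (cases r) (auto dest: rdd_tl)

lemma rdd_act: "rdd r \<Longrightarrow> rdd (act w r)"
  by (induction w) (auto intro: rdd_cns)

lemma cns_cancel: "rdd r \<Longrightarrow> cns a (cns (linv a) r) = r"
proof (cases r)
  case (Cons b rs)
  assume "rdd r"
  show ?thesis
  proof (cases "b = a")
    case True
    then show ?thesis using Cons \<open>rdd r\<close> by (cases rs) auto
  next
    case False
    then show ?thesis using Cons by auto
  qed
qed auto

lemma winv_simps[simp]: "winv [] = []" "winv (a # w) = winv w @ [linv a]"
  "winv (w1 @ w2) = winv w2 @ winv w1"
  by (auto simp: winv_def)

lemma winv_winv[simp]: "winv (winv w) = w"
  by (induction w) auto

lemma act_winv: "rdd r \<Longrightarrow> act w (act (winv w) r) = r"
  by (induction w arbitrary: r) (auto simp: cns_cancel rdd_cns)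

lemma act_winv2: "rdd r \<Longrightarrow> act (winv w) (act w r) = r"
  using act_winv[of r "winv w"] by simp

lemma act_cns: "rdd s \<Longrightarrow> act (cns x R) s = cns x (act R s)"
proof (cases R)
  case (Cons y R')
  assume s: "rdd s"
  show ?thesis
  proof (cases "y = linv x")
    case True
    then show ?thesis using Cons cns_cancel[OF rdd_act[OF s, of R'], of x] by auto
  qed (use Cons in auto)
qed auto

lemma act_red: "rdd s \<Longrightarrow> act a s = act (act a []) s"
  by (induction a) (auto simp: act_cns)

lemma red_rdd: "rdd r \<Longrightarrow> act r [] = r"
  by (induction r rule: rdd.induct) auto

lemma not_rdd: "\<not> rdd y \<Longrightarrow> \<exists>p a q. y = p @ [a, linv a] @ q"
proof (induction y rule: rdd.induct)
  case (3 a b xs)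
  show ?case
  proof (cases "b = linv a")
    case True then show ?thesis by (metis append_Cons append_Nil)
  next
    case False
    then obtain p c q where "b # xs = p @ [c, linv c] @ q" using 3 by auto
    then have "a # b # xs = (a # p) @ [c, linv c] @ q" by simp
    then show ?thesis by blast
  qed
qed auto

lemma red_cancel: "act (p @ [a, linv a] @ q) [] = act (p @ q) []"
  using cns_cancel[OF rdd_act[of "[]" q], of a] by simp


lemma path_obj: "is_path \<kappa> w s t \<Longrightarrow> obj \<kappa> s \<and> obj \<kappa> t"
  by (induction rule: is_path.induct) (auto elim: valid_letter.elims)

lemma path_Nil: "is_path \<kappa> [] s t \<longleftrightarrow> s = t \<and> obj \<kappa> s"
  by (auto elim: is_path.cases intro: is_path.Nil)

lemma path_Cons: "is_path \<kappa> (l # w) s t \<longleftrightarrow> valid_letter \<kappa> l \<and> is_path \<kappa> w s (lsrc l) \<and> t = ltgt l"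
  by (auto elim: is_path.cases intro: is_path.Cons)

lemma path_append: "is_path \<kappa> (p @ q) s t \<longleftrightarrow> (\<exists>m. is_path \<kappa> p m t \<and> is_path \<kappa> q s m)"
  by (induction p arbitrary: t) (auto simp: path_Nil path_Cons dest: path_obj)

lemma path_unique: "is_path \<kappa> w s t \<Longrightarrow> w \<noteq> [] \<Longrightarrow> is_path \<kappa> w s' t' \<Longrightarrow> s = s' \<and> t = t'"
proof (induction w arbitrary: t t')
  case (Cons l w)
  then show ?case by (cases w) (auto simp: path_Cons path_Nil)
qed auto

lemma lsrc_linv[simp]: "lsrc (linv a) = ltgt a" and ltgt_linv[simp]: "ltgt (linv a) = lsrc a"
  by (cases a; simp)+

lemma valid_linv[simp]: "valid_letter \<kappa> (linv a) = valid_letter \<kappa> a"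
  by (cases a) auto

lemma path_winv: "is_path \<kappa> c a b \<Longrightarrow> is_path \<kappa> (winv c) b a"
proof (induction rule: is_path.induct)
  case (Nil a) then show ?case by (simp add: path_Nil)
next
  case (Cons l w s t)
  then show ?case using path_obj[OF Cons(2)]
    by (auto simp: path_append path_Cons path_Nil elim: valid_letter.elims)
qed

lemma base_cancel: "valid_letter \<kappa> a \<Longrightarrow> base_rel \<kappa> [a, linv a] []"
proof (cases a)
  case (Gen x1 x2 x3)
  assume "valid_letter \<kappa> a"
  then show ?thesis using Gen by (auto intro: base_rel.cancel)
next
  case (Edge x1 x2)
  assume "valid_letter \<kappa> a"
  then show ?thesis using Edge base_rel.edge[of \<kappa> x1 x2 "[]"] by auto
qed

lemma zstepI: "base_rel \<kappa> u v \<Longrightarrow> is_path \<kappa> (p @ u @ q) s t \<Longrightarrow> is_path \<kappa> (p @ v @ q) s t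
  \<Longrightarrow> zstep \<kappa> (p @ u @ q) (p @ v @ q)"
  unfolding zstep_def by blast

lemma step_cancel:
  assumes "is_path \<kappa> (p @ [a, linv a] @ q) s t"
  shows "zstep \<kappa> (p @ [a, linv a] @ q) (p @ q) \<and> is_path \<kappa> (p @ q) s t"
proof -
  from assms obtain m1 where p: "is_path \<kappa> p m1 t" and r: "is_path \<kappa> ([a, linv a] @ q) s m1"
    unfolding path_append[of \<kappa> p "[a, linv a] @ q" s t] by blast
  from r obtain m2 where q: "is_path \<kappa> q s m2" and aa: "is_path \<kappa> [a, linv a] m2 m1"
    unfolding path_append[of \<kappa> "[a, linv a]" q s m1] by blast
  from aa have va: "valid_letter \<kappa> a" and "m1 = m2" by (auto simp: path_Cons path_Nil)
  then have pq: "is_path \<kappa> (p @ q) s t" using p q by (auto simp: path_append)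
  have "zstep \<kappa> (p @ [a, linv a] @ q) (p @ [] @ q)"
    using zstepI[OF base_cancel[OF va], of p q s t] assms pq by simp
  then show ?thesis using pq by simp
qed

abbreviation R :: "'o::wellorder \<Rightarrow> 'o letter list \<Rightarrow> 'o letter list \<Rightarrow> bool" where
  "R \<kappa> \<equiv> (\<lambda>w w'. zstep \<kappa> w w' \<or> zstep \<kappa> w' w)"

lemma zeq_refl: "zeq \<kappa> w w" by (simp add: zeq_def)

lemma zeq_trans: "zeq \<kappa> a b \<Longrightarrow> zeq \<kappa> b c \<Longrightarrow> zeq \<kappa> a c"
  unfolding zeq_def by (rule rtranclp_trans)

lemma zeq_step: "zstep \<kappa> a b \<Longrightarrow> zeq \<kappa> a b"
  unfolding zeq_def by auto

lemma zeq_sym: "zeq \<kappa> a b \<Longrightarrow> zeq \<kappa> b a"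
  unfolding zeq_def
proof (induction rule: rtranclp_induct)
  case (step y z)
  then have "(R \<kappa>) z y" by blast
  then show ?case using step.IH by (rule converse_rtranclp_into_rtranclp)
qed auto

lemma cancel_winv:
  "is_path \<kappa> (p @ winv c @ c @ q) s t \<Longrightarrow> zeq \<kappa> (p @ winv c @ c @ q) (p @ q)"
proof (induction c arbitrary: p q)
  case Nil then show ?case by (simp add: zeq_refl)
next
  case (Cons l c)
  have e: "p @ winv (l # c) @ (l # c) @ q = (p @ winv c) @ [linv l, linv (linv l)] @ (c @ q)"
    by simp
  from step_cancel[of \<kappa> "p @ winv c" "linv l" "c @ q" s t] Cons.prems
  have "zstep \<kappa> ((p @ winv c) @ [linv l, linv (linv l)] @ (c @ q)) ((p @ winv c) @ (c @ q))"
    and "is_path \<kappa> ((p @ winv c) @ (c @ q)) s t" by (simp_all only: e)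
  then show ?case using Cons.IH[of p q] e
    by (metis append.assoc zeq_step zeq_trans)
qed

lemma zeq_path: "zeq \<kappa> w w' \<Longrightarrow> \<exists>s t. is_path \<kappa> w s t \<Longrightarrow> \<exists>s t. is_path \<kappa> w' s t"
  unfolding zeq_def
proof (induction rule: rtranclp_induct)
  case (step y z)
  then show ?case unfolding zstep_def by blast
qed auto

lemma claimA: "is_path \<kappa> y s t \<Longrightarrow> act y [] = [] \<Longrightarrow> zeq \<kappa> y []"
proof (induction "length y" arbitrary: y rule: less_induct)
  case less
  show ?case
  proof (cases "rdd y")
    case True
    then have "y = []" using less.prems red_rdd by metis
    then show ?thesis by (simp add: zeq_refl)
  next
    case False
    then obtain p a q where y: "y = p @ [a, linv a] @ q" using not_rdd by blast
    from step_cancel[of \<kappa> p a q s t] less.prems y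
    have st: "zstep \<kappa> y (p @ q)" and pq: "is_path \<kappa> (p @ q) s t" by auto
    have "act (p @ q) [] = []" using less.prems y red_cancel by metis
    then have "zeq \<kappa> (p @ q) []" using less.hyps[of "p @ q"] pq y by auto
    then show ?thesis using st zeq_step zeq_trans by metis
  qed
qed


fun isE :: "'o letter \<Rightarrow> bool" where
  "isE (Gen _ _ _) = False" | "isE (Edge _ _) = True"

lemma isE_linv[simp]: "isE (linv a) = isE a" by (cases a) auto

definition phi :: "'o letter list \<Rightarrow> 'o letter list" where
  "phi w = act (filter isE w) []"

lemma filter_winv: "filter isE (winv w) = winv (filter isE w)"
  by (induction w) auto

lemma base_act: "base_rel \<kappa> u v \<Longrightarrow> rdd r \<Longrightarrow> act (filter isE u) r = act (filter isE v) r"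
proof (induction rule: base_rel.induct)
  case (cancel \<alpha> \<xi> s)
  then show ?case by simp
next
  case (edge \<alpha> \<beta> a)
  have "filter isE (map (gen_at \<gamma>) a) = []" for \<gamma> by (induction a) (auto simp: gen_at_def)
  then show ?case using cns_cancel[OF edge(5), of "Edge \<alpha> \<beta>"] by simp
qed

lemma phi_step: "zstep \<kappa> w w' \<Longrightarrow> phi w = phi w'"
proof -
  assume "zstep \<kappa> w w'"
  then obtain p u v q where "w = p @ u @ q" "w' = p @ v @ q" "base_rel \<kappa> u v"
    unfolding zstep_def by blast
  then show ?thesis unfolding phi_def
    using base_act[OF _ rdd_act[of "[]" "filter isE q"], of \<kappa> u v] by simp
qed

lemma phi_zeq: "zeq \<kappa> w w' \<Longrightarrow> phi w = phi w'"
  unfolding zeq_def by (induction rule: rtranclp_induct) (auto dest: phi_step)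

definition Rc where "Rc \<kappa> w w' = (R \<kappa> w w' \<and> w \<noteq> [])"

lemma cut: "zeq \<kappa> w [] \<Longrightarrow> (Rc \<kappa>)\<^sup>*\<^sup>* w []"
  unfolding zeq_def
proof (induction rule: converse_rtranclp_induct)
  case (step y z)
  show ?case
  proof (cases "y = []")
    case False
    then have "Rc \<kappa> y z" using step(1) by (simp add: Rc_def)
    then show ?thesis using step(3) by (rule converse_rtranclp_into_rtranclp)
  qed simp
qed simp

lemma zstep_ctx: "zstep \<kappa> w w1 \<Longrightarrow> is_path \<kappa> (p @ w @ q) s' t' \<Longrightarrow> is_path \<kappa> (p @ w1 @ q) s' t'
  \<Longrightarrow> zstep \<kappa> (p @ w @ q) (p @ w1 @ q)"
proof -
  assume "zstep \<kappa> w w1" and a: "is_path \<kappa> (p @ w @ q) s' t'" "is_path \<kappa> (p @ w1 @ q) s' t'"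
  then obtain p0 u v q0 where "w = p0 @ u @ q0" "w1 = p0 @ v @ q0" "base_rel \<kappa> u v"
    unfolding zstep_def by blast
  then show ?thesis using zstepI[of \<kappa> u v "p @ p0" "q0 @ q" s' t'] a by simp
qed

lemma path_ctx:
  assumes "is_path \<kappa> (p @ w @ q) s' t'" "is_path \<kappa> w s t" "w \<noteq> []" "is_path \<kappa> w1 s t"
  shows "is_path \<kappa> (p @ w1 @ q) s' t'"
proof -
  from assms(1) obtain m1 where p: "is_path \<kappa> p m1 t'" and r: "is_path \<kappa> (w @ q) s' m1"
    unfolding path_append[of \<kappa> p "w @ q" s' t'] by blast
  from r obtain m2 where q: "is_path \<kappa> q s' m2" and ww: "is_path \<kappa> w m2 m1"
    unfolding path_append[of \<kappa> w q s' m1] by blast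
  from path_unique[OF ww assms(3) assms(2)] have "m2 = s" "m1 = t" by auto
  then show ?thesis using p q assms(4) path_append by metis
qed

lemma cong: "(Rc \<kappa>)\<^sup>*\<^sup>* w [] \<Longrightarrow> is_path \<kappa> w s t \<Longrightarrow> is_path \<kappa> (p @ w @ q) s' t'
   \<Longrightarrow> zeq \<kappa> (p @ w @ q) (p @ q)"
proof (induction arbitrary: s t rule: converse_rtranclp_induct)
  case base
  then show ?case by (simp add: zeq_refl)
next
  case (step y z)
  from step(1) have ne: "y \<noteq> []" and r: "zstep \<kappa> y z \<or> zstep \<kappa> z y" by (auto simp: Rc_def)
  from r obtain s0 t0 where "is_path \<kappa> y s0 t0" "is_path \<kappa> z s0 t0" unfolding zstep_def by blast
  with path_unique[OF step(4) ne] have zp: "is_path \<kappa> z s t" by metis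
  have zc: "is_path \<kappa> (p @ z @ q) s' t'" using path_ctx[OF step(5) step(4) ne zp] .
  have "zeq \<kappa> (p @ y @ q) (p @ z @ q)"
    using r zstep_ctx[OF _ step(5) zc] zstep_ctx[OF _ zc step(5)] zeq_step zeq_sym by metis
  then show ?case using step(3)[OF zp zc] zeq_trans by metis
qed

theorem lemma3p12:
  fixes \<kappa> \<alpha> \<beta> \<gamma> :: "'o::wellorder" and z u v :: "'o letter list"
  assumes "uncountable_cofinality \<kappa>"
    and "is_path \<kappa> z \<alpha> \<alpha>"
    and "is_path \<kappa> u \<alpha> \<beta>"
    and "is_path \<kappa> v \<alpha> \<gamma>"
    and "in_ZX \<kappa> (u @ z @ winv u)"
    and "in_ZY \<kappa> (v @ z @ winv v)"
  shows "zeq \<kappa> z []"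
proof -
  obtain \<delta> x where x: "\<forall>l\<in>set x. \<exists>\<xi> s. l = Gen \<delta> \<xi> s" "zeq \<kappa> (u @ z @ winv u) x"
    using assms(5) unfolding in_ZX_def by blast
  obtain y where y: "\<forall>l\<in>set y. \<exists>a b. l = Edge a b" "zeq \<kappa> (v @ z @ winv v) y"
    using assms(6) unfolding in_ZY_def by blast
  have "filter isE x = []" using x(1) by (induction x) auto
  then have "phi (u @ z @ winv u) = []" using phi_zeq[OF x(2)] by (simp add: phi_def)
  define U where "U = filter isE u"
  define Z where "Z = filter isE z"
  define V where "V = filter isE v"
  have hu: "act U (act Z (act (winv U) [])) = []"
    using \<open>phi (u @ z @ winv u) = []\<close> by (simp add: phi_def filter_winv U_def Z_def)
  define r0 where "r0 = act (winv U) []"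
  have "act Z r0 = act (winv U) (act U (act Z r0))"
    using act_winv2[OF rdd_act[OF rdd_act[of "[]" "winv U"]], of U Z] by (simp add: r0_def)
  also have "\<dots> = r0" using hu by (simp add: r0_def)
  finally have zr0: "act Z r0 = r0" .
  have rU: "rdd (act U [])" by (rule rdd_act) simp
  have "act Z [] = act Z (act (winv U) (act U []))" using act_winv2[of "[]" U] by simp
  also have "\<dots> = act (Z @ winv U) (act U [])" by simp
  also have "\<dots> = act (act (Z @ winv U) []) (act U [])" using act_red[OF rU] by blast
  also have "act (Z @ winv U) [] = act (winv U) []" using zr0 by (simp add: r0_def)
  also have "act (act (winv U) []) (act U []) = act (winv U) (act U [])"
    using act_red[OF rU, of "winv U"] by simp
  also have "\<dots> = []" using act_winv2[of "[]" U] by simp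
  finally have Z0: "act Z [] = []" .
  have "phi (v @ z @ winv v) = act V (act Z (act (winv V) []))"
    by (simp add: phi_def filter_winv V_def Z_def)
  also have "act Z (act (winv V) []) = act (act Z []) (act (winv V) [])"
    using act_red[OF rdd_act[of "[]" "winv V"]] by simp
  also have "act V (act (act Z []) (act (winv V) [])) = []"
    using Z0 act_winv[of "[]" V] by simp
  finally have "phi y = []" using phi_zeq[OF y(2)] by simp
  moreover have "filter isE y = y" using y(1) by (induction y) auto
  ultimately have ry: "act y [] = []" by (simp add: phi_def)
  have pv: "is_path \<kappa> (v @ z @ winv v) \<gamma> \<gamma>"
    using assms(2,4) path_winv[OF assms(4)] path_append by metis
  obtain s t where "is_path \<kappa> y s t" using zeq_path[OF y(2)] pv by blast
  then have "zeq \<kappa> y []" using claimA ry by blast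
  then have e1: "zeq \<kappa> (v @ z @ winv v) []" using y(2) zeq_trans by blast
  have pbig: "is_path \<kappa> (winv v @ (v @ z @ winv v) @ v) \<alpha> \<alpha>"
    using pv path_winv[OF assms(4)] assms(4) path_append by metis
  have e2: "zeq \<kappa> (winv v @ (v @ z @ winv v) @ v) (winv v @ v)"
    using cong[OF cut[OF e1] pv pbig] .
  have e3: "zeq \<kappa> ([] @ winv v @ v @ (z @ winv v @ v)) ([] @ (z @ winv v @ v))"
    by (rule cancel_winv[of _ _ _ _ \<alpha> \<alpha>]) (use pbig in simp)
  have pzv: "is_path \<kappa> (z @ winv v @ v @ []) \<alpha> \<alpha>"
    using assms(2,4) path_winv[OF assms(4)] path_append by (metis append_Nil2)
  have e4: "zeq \<kappa> (z @ winv v @ v @ []) (z @ [])"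
    by (rule cancel_winv[OF pzv])
  have pvv: "is_path \<kappa> ([] @ winv v @ v @ []) \<alpha> \<alpha>"
    using assms(4) path_winv[OF assms(4)] path_append by (metis append_Nil append_Nil2)
  have e5: "zeq \<kappa> ([] @ winv v @ v @ []) ([] @ [])"
    by (rule cancel_winv[OF pvv])
  have "zeq \<kappa> z (z @ winv v @ v)" using e4 zeq_sym by simp
  moreover have "zeq \<kappa> (z @ winv v @ v) (winv v @ (v @ z @ winv v) @ v)" using e3 zeq_sym by simp
  ultimately have "zeq \<kappa> z (winv v @ v)" using e2 zeq_trans by blast
  then show ?thesis using e5 zeq_trans by simp
qed

end
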